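(* Let $r,t$ be integers with $2\le r\le t\le 2r$, let $\alpha=2^r-1$, $\beta=2^{t-1}-2^{r-1}$, and let $\mathcal{C}\subseteq\mathbb{Z}_2^\alpha\times\mathbb{Z}_4^\beta$ be a $\mathbb{Z}_2\mathbb{Z}_4$-additive 1-perfect code. If $\mathcal{C}$ is $\mathbb{Z}_2\mathbb{Z}_4$-cyclic, then $t=r$ or $t=2r$.
   Context: A $\mathbb{Z}_2\mathbb{Z}_4$-additive code is an additive subgroup of $\mathbb{Z}_2^\alpha\times\mathbb{Z}_4^\beta$; vectors are $(u\mid u')$ with $u\in\mathbb{Z}_2^\alpha$, $u'\in\mathbb{Z}_4^\beta$. The Gray map $\phi:\mathbb{Z}_4\to\mathbb{Z}_2^2$ is $0\mapsto(0,0),1\mapsto(0,1),2\mapsto(1,1),3\mapsto(1,0)$, and $\Phi(u\mid u')=(u\mid\phi(u'_1),\dots,\phi(u'_\beta))$. A binary code $C\subseteq\mathbb{Z}_2^n$ is 1-perfect if the Hamming balls of radius 1 around its codewords partition $\mathbb{Z}_2^n$; a $\mathbb{Z}_2\mathbb{Z}_4$-additive code is 1-perfect if its Gray image is. With $\sigma(v_1,\dots,v_m)=(v_m,v_1,\dots,v_{m-1})$ and $\sigma(u\mid u')=(\sigma(u)\mid\sigma(u'))$, a code is $\mathbb{Z}_2\mathbb{Z}_4$-cyclic if it is closed under $\sigma$. *)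

theory Defs
  imports Main "HOL-Library.Numeral_Type"
begin

text \<open>Z2 is the type 2, Z4 is the type 4 (residue rings from Numeral_Type).
  A vector of Z2^alpha x Z4^beta is a pair (u, u') of lists of lengths alpha, beta.\<close>

type_synonym z2z4vec = "2 list \<times> 4 list"

definition z2z4_space :: "nat \<Rightarrow> nat \<Rightarrow> z2z4vec set" where
  "z2z4_space \<alpha> \<beta> = {(u, u'). length u = \<alpha> \<and> length u' = \<beta>}"

definition vadd :: "z2z4vec \<Rightarrow> z2z4vec \<Rightarrow> z2z4vec" where
  "vadd x y = (map2 (+) (fst x) (fst y), map2 (+) (snd x) (snd y))"

definition vneg :: "z2z4vec \<Rightarrow> z2z4vec" where
  "vneg x = (map uminus (fst x), map uminus (snd x))"

definition vzero :: "nat \<Rightarrow> nat \<Rightarrow> z2z4vec" where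
  "vzero \<alpha> \<beta> = (replicate \<alpha> 0, replicate \<beta> 0)"

definition z2z4_additive :: "nat \<Rightarrow> nat \<Rightarrow> z2z4vec set \<Rightarrow> bool" where
  "z2z4_additive \<alpha> \<beta> C \<longleftrightarrow> C \<subseteq> z2z4_space \<alpha> \<beta> \<and> vzero \<alpha> \<beta> \<in> C \<and>
     (\<forall>x\<in>C. \<forall>y\<in>C. vadd x y \<in> C) \<and> (\<forall>x\<in>C. vneg x \<in> C)"

definition gray :: "4 \<Rightarrow> 2 list" where
  "gray a = (if a = 0 then [0, 0] else if a = 1 then [0, 1]
             else if a = 2 then [1, 1] else [1, 0])"

definition Gray_Phi :: "z2z4vec \<Rightarrow> 2 list" where
  "Gray_Phi x = fst x @ concat (map gray (snd x))"

definition hamming_dist :: "2 list \<Rightarrow> 2 list \<Rightarrow> nat" where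
  "hamming_dist x y = card {i. i < length x \<and> x ! i \<noteq> y ! i}"

definition one_perfect :: "nat \<Rightarrow> 2 list set \<Rightarrow> bool" where
  "one_perfect n D \<longleftrightarrow> D \<subseteq> {x. length x = n} \<and>
     (\<forall>x. length x = n \<longrightarrow> (\<exists>!c. c \<in> D \<and> hamming_dist c x \<le> 1))"

definition z2z4_one_perfect :: "nat \<Rightarrow> nat \<Rightarrow> z2z4vec set \<Rightarrow> bool" where
  "z2z4_one_perfect \<alpha> \<beta> C \<longleftrightarrow> one_perfect (\<alpha> + 2 * \<beta>) (Gray_Phi ` C)"

definition cshift :: "'a list \<Rightarrow> 'a list" where
  "cshift v = (if v = [] then [] else last v # butlast v)"

definition z2z4_sigma :: "z2z4vec \<Rightarrow> z2z4vec" where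
  "z2z4_sigma x = (cshift (fst x), cshift (snd x))"

definition z2z4_cyclic :: "z2z4vec set \<Rightarrow> bool" where
  "z2z4_cyclic C \<longleftrightarrow> (\<forall>x\<in>C. z2z4_sigma x \<in> C)"

end

theory Submission imports Defs "HOL-Number_Theory.Cong" begin
lemma ex4: "(x::4) = 0 \<or> x = 1 \<or> x = 2 \<or> x = 3"
proof (induct x)
  case (of_int z)
  then have "z = 0 \<or> z = 1 \<or> z = 2 \<or> z = 3" by auto
  then show ?case by auto
qed

lemma ex2: "(x::2) = 0 \<or> x = 1"
proof (induct x)
  case (of_int z)
  then have "z = 0 \<or> z = 1" by auto
  then show ?case by auto
qed

definition lee :: "4 \<Rightarrow> nat" where
  "lee a = (if a = 0 then 0 else if a = 2 then 2 else 1)"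

lemma hd_filter:
  "length x = length y \<Longrightarrow>
   hamming_dist x y = length (filter (\<lambda>p. fst p \<noteq> snd p) (zip x y))"
  unfolding hamming_dist_def length_filter_conv_card
  by (rule arg_cong[where f=card]) (auto simp: nth_zip)

lemma hd_append:
  "length x1 = length y1 \<Longrightarrow> length x2 = length y2 \<Longrightarrow>
   hamming_dist (x1 @ x2) (y1 @ y2) = hamming_dist x1 y1 + hamming_dist x2 y2"
  by (simp add: hd_filter zip_append)

lemma hd_gray: "hamming_dist (gray a) (gray b) = lee (a - b)"
  using ex4[of a] ex4[of b]
  by (auto simp: hd_filter gray_def lee_def)

lemma length_gray[simp]: "length (gray a) = 2"
  by (simp add: gray_def)

lemma length_concat_gray[simp]: "length (concat (map gray u)) = 2 * length u"
  by (induct u) auto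

lemma hd_concat:
  "length u = length v \<Longrightarrow>
   hamming_dist (concat (map gray u)) (concat (map gray v)) = (\<Sum>j<length u. lee (u!j - v!j))"
proof (induct u v rule: list_induct2)
  case Nil
  then show ?case by (simp add: hamming_dist_def)
next
  case (Cons x xs y ys)
  have "hamming_dist (concat (map gray (x#xs))) (concat (map gray (y#ys)))
     = hamming_dist (gray x) (gray y) + hamming_dist (concat (map gray xs)) (concat (map gray ys))"
    using Cons by (simp add: hd_append)
  also have "\<dots> = lee (x - y) + (\<Sum>j<length xs. lee (xs!j - ys!j))"
    using Cons by (simp add: hd_gray)
  also have "\<dots> = (\<Sum>j<length (x#xs). lee ((x#xs)!j - (y#ys)!j))"
    by (simp only: length_Cons sum.lessThan_Suc_shift) simp
  finally show ?case .
qed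

lemma hd_Phi:
  assumes "x \<in> z2z4_space a b" "y \<in> z2z4_space a b"
  shows "hamming_dist (Gray_Phi x) (Gray_Phi y) =
     hamming_dist (fst x) (fst y) + (\<Sum>j<b. lee (snd x!j - snd y!j))"
  using assms by (auto simp: z2z4_space_def Gray_Phi_def hd_append hd_concat)

lemma hd_self[simp]: "hamming_dist x x = 0"
  by (simp add: hamming_dist_def)

lemma perfect_dist:
  assumes P: "one_perfect n D" and a: "a \<in> D" and b: "b \<in> D"
  shows "hamming_dist a b = 0 \<or> hamming_dist a b \<ge> 3"
proof (rule ccontr)
  assume H: "\<not> (hamming_dist a b = 0 \<or> hamming_dist a b \<ge> 3)"
  have la: "length a = n" and lb: "length b = n" using P a b by (auto simp: one_perfect_def)
  define S where "S = {i. i < length a \<and> a!i \<noteq> b!i}"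
  have cS: "card S = hamming_dist a b" by (simp add: S_def hamming_dist_def)
  have fS: "finite S" by (simp add: S_def)
  have "S \<noteq> {}" using H cS by auto
  then obtain k where k: "k \<in> S" by blast
  define z where "z = a[k := b!k]"
  have lz: "length z = n" using la by (simp add: z_def)
  have "{i. i < length a \<and> a!i \<noteq> z!i} = {k}"
    using k by (auto simp: z_def S_def nth_list_update)
  then have d1: "hamming_dist a z = 1" by (simp add: hamming_dist_def)
  have "{i. i < length b \<and> b!i \<noteq> z!i} = S - {k}"
    using k la lb by (auto simp: z_def S_def nth_list_update)
  then have "hamming_dist b z = card S - 1"
    using fS k by (simp add: hamming_dist_def)
  then have d2: "hamming_dist b z \<le> 1" using H cS by auto
  have "\<exists>!c. c \<in> D \<and> hamming_dist c z \<le> 1" using P lz by (auto simp: one_perfect_def)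
  then have "a = b" using a b d1 d2 by auto
  then show False using H by simp
qed

lemma cshift_rotate: "cshift v = rotate (length v - 1) v"
proof (cases "v = []")
  case True then show ?thesis by (simp add: cshift_def)
next
  case False
  show ?thesis
  proof (rule nth_equalityI)
    show "length (cshift v) = length (rotate (length v - 1) v)"
      using False by (simp add: cshift_def)
  next
    fix i assume "i < length (cshift v)"
    then have i: "i < length v" using False by (simp add: cshift_def)
    show "cshift v ! i = rotate (length v - 1) v ! i"
    proof (cases i)
      case 0
      then show ?thesis using False i by (simp add: cshift_def nth_rotate last_conv_nth)
    next
      case (Suc j)
      have "length v - 1 + i = length v + j" using Suc i by simp
      then have "(length v - 1 + i) mod length v = j" using Suc i by simp
      then show ?thesis using False i Suc by (simp add: cshift_def nth_rotate nth_butlast)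
    qed
  qed
qed

lemma length_cshift[simp]: "length (cshift v) = length v"
  by (simp add: cshift_rotate)

lemma cshift_pow: "(cshift ^^ k) v = rotate (k * (length v - 1)) v"
proof (induct k)
  case 0 then show ?case by simp
next
  case (Suc k)
  have "length ((cshift ^^ k) v) = length v" by (simp add: Suc)
  then show ?case using Suc by (simp add: cshift_rotate rotate_rotate add.commute)
qed

lemma sigma_pow: "(z2z4_sigma ^^ k) x = ((cshift ^^ k) (fst x), (cshift ^^ k) (snd x))"
  by (induct k) (auto simp: z2z4_sigma_def)

lemma cyclic_pow: "z2z4_cyclic C \<Longrightarrow> x \<in> C \<Longrightarrow> (z2z4_sigma ^^ k) x \<in> C"
  by (induct k) (auto simp: z2z4_cyclic_def)

lemma lee_double: "b = 0 \<or> b = 2 \<Longrightarrow> lee (a + a) \<le> 2 * lee (a - b)"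
  using ex4[of a] by (auto simp: lee_def)

lemma lee_double0: "a + a = 0 \<Longrightarrow> b = 0 \<or> b = 2 \<Longrightarrow> lee (a - b) = 0 \<or> lee (a - b) = 2"
  using ex4[of a] by (auto simp: lee_def)

lemma lee_0[simp]: "lee a = 0 \<longleftrightarrow> a = 0"
  by (simp add: lee_def)

lemma two_add_self: "(a::2) + a = 0"
  using ex2[of a] by auto

theorem proposition3p1:
  fixes r t :: nat and C :: "z2z4vec set"
  assumes "2 \<le> r" and "r \<le> t" and "t \<le> 2 * r"
    and "z2z4_additive (2 ^ r - 1) (2 ^ (t - 1) - 2 ^ (r - 1)) C"
    and "z2z4_one_perfect (2 ^ r - 1) (2 ^ (t - 1) - 2 ^ (r - 1)) C"
    and "z2z4_cyclic C"
  shows "t = r \<or> t = 2 * r"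
proof (rule ccontr)
  assume nt: "\<not> (t = r \<or> t = 2 * r)"
  then have rt: "r < t" and tr: "t < 2 * r" using assms(2,3) by auto
  define A :: nat where "A = 2 ^ r - 1"
  define B :: nat where "B = 2 ^ (t - 1) - 2 ^ (r - 1)"
  have add: "z2z4_additive A B C" using assms(4) by (simp add: A_def B_def)
  have perf: "one_perfect (A + 2 * B) (Gray_Phi ` C)"
    using assms(5) by (simp add: A_def B_def z2z4_one_perfect_def)
  have sub: "C \<subseteq> z2z4_space A B" and zC: "vzero A B \<in> C"
    and addC: "\<And>x y. x \<in> C \<Longrightarrow> y \<in> C \<Longrightarrow> vadd x y \<in> C"
    using add by (auto simp: z2z4_additive_def)
  have dist: "\<And>x y. x \<in> C \<Longrightarrow> y \<in> C \<Longrightarrow>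
      hamming_dist (Gray_Phi x) (Gray_Phi y) = 0 \<or> hamming_dist (Gray_Phi x) (Gray_Phi y) \<ge> 3"
    using perfect_dist[OF perf] by blast
  have near: "\<And>x. x \<in> z2z4_space A B \<Longrightarrow> \<exists>c\<in>C. hamming_dist (Gray_Phi c) (Gray_Phi x) \<le> 1"
  proof -
    fix x assume "x \<in> z2z4_space A B"
    then have "length (Gray_Phi x) = A + 2 * B" by (auto simp: z2z4_space_def Gray_Phi_def)
    then show "\<exists>c\<in>C. hamming_dist (Gray_Phi c) (Gray_Phi x) \<le> 1"
      using perf unfolding one_perfect_def by blast
  qed
  have r2: "2 ^ (r - 1) < (2::nat) ^ (t - 1)" using rt assms(1) by (intro power_strict_increasing) auto
  then have Bpos: "B > 0" by (simp add: B_def)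
  have A3: "A \<ge> 3"
  proof -
    have "(2::nat) ^ 2 \<le> 2 ^ r" using assms(1) by (intro power_increasing) auto
    then show ?thesis by (simp add: A_def)
  qed
  define ww :: "4 list" where "ww = (replicate B 0)[0 := 2]"
  have ww_nth: "\<And>j. j < B \<Longrightarrow> ww ! j = (if j = 0 then 2 else 0)"
    using Bpos by (simp add: ww_def nth_list_update)
  define w where "w = (replicate A (0::2), ww)"
  have wS: "w \<in> z2z4_space A B" by (simp add: w_def ww_def z2z4_space_def)
  obtain c where cC: "c \<in> C" and cw: "hamming_dist (Gray_Phi c) (Gray_Phi w) \<le> 1"
    using near[OF wS] by blast
  have cS: "c \<in> z2z4_space A B" using cC sub by auto
  define u where "u = fst c"
  define c' where "c' = snd c"
  have lu: "length u = A" and lc: "length c' = B" using cS by (auto simp: u_def c'_def z2z4_space_def)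
  have c_eq: "c = (u, c')" by (simp add: u_def c'_def)
  have hw: "hamming_dist u (replicate A 0) + (\<Sum>j<B. lee (c'!j - ww!j)) \<le> 1"
    using cw hd_Phi[OF cS wS] by (simp add: u_def c'_def w_def)
  define d where "d = vadd c c"
  have dC: "d \<in> C" using addC cC by (simp add: d_def)
  have dS: "d \<in> z2z4_space A B" using dC sub by auto
  have zS: "vzero A B \<in> z2z4_space A B" by (simp add: vzero_def z2z4_space_def)
  have d1: "fst d = replicate A 0"
    by (rule nth_equalityI) (auto simp: d_def vadd_def c_eq lu two_add_self)
  have d2: "\<And>j. j < B \<Longrightarrow> snd d ! j = c'!j + c'!j"
    by (simp add: d_def vadd_def c_eq lc)
  have hd_d: "hamming_dist (Gray_Phi d) (Gray_Phi (vzero A B)) = (\<Sum>j<B. lee (c'!j + c'!j))"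
    using hd_Phi[OF dS zS] d1 d2 by (simp add: vzero_def)
  have "(\<Sum>j<B. lee (c'!j + c'!j)) \<le> (\<Sum>j<B. 2 * lee (c'!j - ww!j))"
  proof (rule sum_mono)
    fix j assume "j \<in> {..<B}"
    then have "ww!j = 0 \<or> ww!j = 2" by (simp add: ww_nth)
    then show "lee (c'!j + c'!j) \<le> 2 * lee (c'!j - ww!j)" by (rule lee_double)
  qed
  also have "\<dots> = 2 * (\<Sum>j<B. lee (c'!j - ww!j))" by (simp add: sum_distrib_left)
  also have "\<dots> \<le> 2" using hw by simp
  finally have "hamming_dist (Gray_Phi d) (Gray_Phi (vzero A B)) = 0"
    using dist[OF dC zC] hd_d by linarith
  then have "(\<Sum>j<B. lee (c'!j + c'!j)) = 0" using hd_d by simp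
  then have cc0: "\<And>j. j < B \<Longrightarrow> c'!j + c'!j = 0" by simp
  have cww: "\<And>j. j < B \<Longrightarrow> c'!j = ww!j"
  proof -
    fix j assume j: "j < B"
    have "lee (c'!j - ww!j) \<le> (\<Sum>j<B. lee (c'!j - ww!j))"
      using j by (intro member_le_sum) auto
    then have "lee (c'!j - ww!j) \<le> 1" using hw by linarith
    moreover have "lee (c'!j - ww!j) = 0 \<or> lee (c'!j - ww!j) = 2"
      using lee_double0[OF cc0[OF j]] j by (simp add: ww_nth)
    ultimately show "c'!j = ww!j" by auto
  qed
  have c'ww: "c' = ww" by (rule nth_equalityI) (auto simp: lc ww_def cww)
  have hu: "hamming_dist u (replicate A 0) \<le> 1" using hw by simp
  define S where "S = {i. i < A \<and> u!i \<noteq> 0}"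
  have cardS: "card S = hamming_dist u (replicate A 0)"
    unfolding S_def hamming_dist_def lu by (rule arg_cong[where f=card]) auto
  have "card S \<noteq> 0"
  proof
    assume "card S = 0"
    then have "S = {}" by (simp add: S_def)
    then have "u = replicate A 0" by (intro nth_equalityI) (auto simp: S_def lu)
    then have "c = w" by (simp add: c_eq c'ww w_def)
    moreover have "hamming_dist (Gray_Phi w) (Gray_Phi (vzero A B)) = 2"
    proof -
      obtain B' where B': "B = Suc B'" using Bpos by (cases B) auto
      have "hamming_dist (Gray_Phi w) (Gray_Phi (vzero A B)) = (\<Sum>j<B. lee (ww!j))"
        using hd_Phi[OF wS zS] by (simp add: w_def vzero_def)
      also have "\<dots> = 2" using ww_nth B'
        by (simp only: sum.lessThan_Suc_shift) (simp add: lee_def)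
      finally show ?thesis .
    qed
    ultimately show False using dist[OF cC zC] by simp
  qed
  then have "card S = 1" using cardS hu by simp
  then obtain i where Si: "S = {i}" by (rule card_1_singletonE)
  have i: "i < A" "u!i \<noteq> 0" using Si by (auto simp: S_def)
  have uS: "\<And>k. k < A \<Longrightarrow> u!k \<noteq> 0 \<Longrightarrow> k = i" using Si by (auto simp: S_def)
  define s where "s = B * (A - 1)"
  define v2 where "v2 = (z2z4_sigma ^^ B) c"
  have v2C: "v2 \<in> C" using cyclic_pow[OF assms(6) cC] by (simp add: v2_def)
  have v2S: "v2 \<in> z2z4_space A B" using v2C sub by auto
  have "rotate (B * (B - 1)) c' = c'"
    by (subst rotate_conv_mod) (simp add: lc)
  then have v2_eq: "v2 = (rotate s u, c')"
    by (simp add: v2_def sigma_pow cshift_pow c_eq lu lc s_def)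
  have hv: "hamming_dist (Gray_Phi v2) (Gray_Phi c) = hamming_dist (rotate s u) u"
    using hd_Phi[OF v2S cS] by (simp add: v2_eq c_eq)
  define T where "T = {k. k < A \<and> (s + k) mod A = i}"
  have Apos: "A > 0" using A3 by simp
  have cT: "card T \<le> 1"
  proof -
    have fT: "finite T" by (simp add: T_def)
    have "\<forall>a\<in>T. \<forall>b\<in>T. a = b"
    proof (intro ballI)
      fix a b assume aT: "a \<in> T" and bT: "b \<in> T"
      have ab: "a < A" "b < A" using aT bT by (simp_all add: T_def)
      have "(s + a) mod A = (s + b) mod A" using aT bT by (simp add: T_def)
      then have "[s + a = s + b] (mod A)" unfolding cong_def .
      then have "[a = b] (mod A)" using cong_add_lcancel_nat by blast
      then have "a mod A = b mod A" unfolding cong_def .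
      then show "a = b" using ab by simp
    qed
    then show ?thesis using card_le_Suc0_iff_eq[OF fT] by simp
  qed
  have sub2: "{k. k < length (rotate s u) \<and> rotate s u ! k \<noteq> u ! k} \<subseteq> T \<union> {i}"
  proof
    fix k assume "k \<in> {k. k < length (rotate s u) \<and> rotate s u ! k \<noteq> u ! k}"
    then have k: "k < A" and ne: "u ! ((s + k) mod A) \<noteq> u ! k"
      by (auto simp: nth_rotate lu)
    have m: "(s + k) mod A < A" using Apos by simp
    show "k \<in> T \<union> {i}"
    proof (cases "u!k = 0")
      case True
      then have "u ! ((s + k) mod A) \<noteq> 0" using ne by simp
      then have "(s + k) mod A = i" using uS[OF m] by blast
      then show ?thesis using k by (simp add: T_def)
    next
      case False then have "k = i" using uS[OF k] by blast
      then show ?thesis by simp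
    qed
  qed
  have "hamming_dist (rotate s u) u \<le> card (T \<union> {i})"
    unfolding hamming_dist_def by (rule card_mono[OF _ sub2]) (simp add: T_def)
  also have "\<dots> \<le> card T + card {i}" by (rule card_Un_le)
  also have "\<dots> \<le> 2" using cT by simp
  finally have "hamming_dist (rotate s u) u = 0" using dist[OF v2C cC] hv by linarith
  then have "{k. k < A \<and> rotate s u ! k \<noteq> u ! k} = {}"
    by (simp add: hamming_dist_def lu)
  then have "rotate s u ! i = u ! i" using i by auto
  then have "u ! ((s + i) mod A) \<noteq> 0" using i by (simp add: nth_rotate lu)
  moreover have "(s + i) mod A < A" using Apos by simp
  ultimately have "(s + i) mod A = i" using uS by blast
  then have "A dvd s" by (metis dvd_minus_mod add_diff_cancel_right')
  moreover have "coprime A (A - 1)" using coprime_diff_one_right_nat[OF Apos] .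
  ultimately have AB: "A dvd B" by (simp add: s_def coprime_dvd_mult_left_iff)
  define m where "m = t - r"
  have m1: "1 \<le> m" and mr: "m < r" using rt tr by (auto simp: m_def)
  have "t - 1 = (r - 1) + m" using rt assms(1) by (simp add: m_def)
  then have "B = 2 ^ (r - 1) * (2 ^ m - 1)"
    by (simp add: B_def power_add right_diff_distrib')
  moreover have "coprime A (2 ^ (r - 1))"
  proof -
    have "odd A" using assms(1) by (simp add: A_def)
    then show ?thesis by simp
  qed
  ultimately have "A dvd 2 ^ m - 1" using AB by (simp add: coprime_dvd_mult_right_iff)
  moreover have "0 < (2::nat) ^ m - 1"
  proof -
    have "(2::nat) ^ 1 \<le> 2 ^ m" using m1 by (intro power_increasing) auto
    then show ?thesis by simp
  qed
  ultimately have Am: "A \<le> 2 ^ m - 1" by (intro dvd_imp_le)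
  have mr2: "(2::nat) ^ m < 2 ^ r" using mr by (intro power_strict_increasing) auto
  have "(1::nat) \<le> 2 ^ m" by simp
  then show False using Am mr2 unfolding A_def by linarith
qed
end
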